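(* Let $k\ge1$, $G=(V,E)$ an inductively $k$-independent graph with $k$-independence ordering $v_1,\dots,v_n$, $f:2^V\to\mathbb{R}_{\ge0}$ submodular (not necessarily monotone) with $f(\emptyset)=0$, and $\beta>0$. The algorithm RANDOMIZED-PREEMPTIVE-GREEDY (described in the context) returns an independent set $S_{\mathrm{out}}$ of $G$ such that for every independent set $T$ of $G$, \[ f(T)\le 4\big(k(1+\beta)+1\big)\big(1+\beta^{-1}\big)\,\mathbb{E}[f(S_{\mathrm{out}})]. \]
   Context: $N(v)$ is the neighbourhood of $v$ (excluding $v$); $G$ is inductively $k$-independent with $k$-independence ordering $v_1,\dots,v_n$ if for every $i$, $G[N(v_i)\cap\{v_i,\dots,v_n\}]$ has no independent set of size more than $k$. For a graph with vertex ordering $u_1<\dots<u_m$ and $S$ a vertex set: $f_S(v)=f(S\cup\{v\})-f(S)$ and $\nu_f(S,u)=f_{S'}(u)$ with $S'=\{s\in S:s<u\}$. PREEMPTIVE-GREEDY on such an ordered graph (parameter $\beta$): start with $S=\emptyset$; for each vertex $v$ in order: let $C=N(v)\cap S$; if $f_S(v)\ge(1+\beta)\sum_{u\in C}\nu_f(S,u)$, replace $S$ by $(S\setminus C)\cup\{v\}$; return final $S$. RANDOMIZED-PREEMPTIVE-GREEDY: let $V'\subseteq V$ contain each vertex independently with probability $1/2$, and return the output of PREEMPTIVE-GREEDY run on the induced subgraph $G[V']$ with the ordering inherited from $v_1,\dots,v_n$, with $f$ restricted to subsets of $V'$, and parameter $\beta$. *)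

theory Defs
  imports Complex_Main
begin

text \<open>Graphs: vertex set V, symmetric irreflexive edge relation E.
  Vertex orderings are given by distinct lists.\<close>

definition indep_set :: "('a \<Rightarrow> 'a \<Rightarrow> bool) \<Rightarrow> 'a set \<Rightarrow> bool" where
  "indep_set E I \<longleftrightarrow> (\<forall>u\<in>I. \<forall>w\<in>I. \<not> E u w)"

definition nbhd :: "'a set \<Rightarrow> ('a \<Rightarrow> 'a \<Rightarrow> bool) \<Rightarrow> 'a \<Rightarrow> 'a set" where
  "nbhd V E v = {u \<in> V. E v u \<and> u \<noteq> v}"

definition inductively_k_independent ::
  "nat \<Rightarrow> ('a \<Rightarrow> 'a \<Rightarrow> bool) \<Rightarrow> 'a list \<Rightarrow> bool" where
  "inductively_k_independent k E vs \<longleftrightarrow>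
     (\<forall>i < length vs. \<forall>I. I \<subseteq> nbhd (set vs) E (vs ! i) \<inter> set (drop i vs)
        \<and> indep_set E I \<longrightarrow> card I \<le> k)"

definition submodular_on :: "'a set \<Rightarrow> ('a set \<Rightarrow> real) \<Rightarrow> bool" where
  "submodular_on V f \<longleftrightarrow>
     (\<forall>A B. A \<subseteq> V \<longrightarrow> B \<subseteq> V \<longrightarrow> f (A \<union> B) + f (A \<inter> B) \<le> f A + f B)"

definition before :: "'a list \<Rightarrow> 'a \<Rightarrow> 'a \<Rightarrow> bool" where
  "before xs a b \<longleftrightarrow> (\<exists>i j. i < j \<and> j < length xs \<and> xs ! i = a \<and> xs ! j = b)"

definition marg :: "('a set \<Rightarrow> real) \<Rightarrow> 'a set \<Rightarrow> 'a \<Rightarrow> real" where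
  "marg f S v = f (S \<union> {v}) - f S"

definition nu :: "'a list \<Rightarrow> ('a set \<Rightarrow> real) \<Rightarrow> 'a set \<Rightarrow> 'a \<Rightarrow> real" where
  "nu xs f S u = marg f {s \<in> S. before xs s u} u"

definition pg_step ::
  "('a \<Rightarrow> 'a \<Rightarrow> bool) \<Rightarrow> ('a set \<Rightarrow> real) \<Rightarrow> real \<Rightarrow> 'a list \<Rightarrow> 'a set \<Rightarrow> 'a \<Rightarrow> 'a set" where
  "pg_step E f \<beta> xs S v =
     (let C = nbhd (set xs) E v \<inter> S in
      if marg f S v \<ge> (1 + \<beta>) * (\<Sum>u\<in>C. nu xs f S u) then (S - C) \<union> {v} else S)"

definition preemptive_greedy ::
  "('a \<Rightarrow> 'a \<Rightarrow> bool) \<Rightarrow> ('a set \<Rightarrow> real) \<Rightarrow> real \<Rightarrow> 'a list \<Rightarrow> 'a set" where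
  "preemptive_greedy E f \<beta> xs = fold (\<lambda>v S. pg_step E f \<beta> xs S v) xs {}"

text \<open>Output of RANDOMIZED-PREEMPTIVE-GREEDY for the sample V' (the induced subgraph
  G[V'] with inherited ordering).\<close>
definition rpg_run ::
  "('a \<Rightarrow> 'a \<Rightarrow> bool) \<Rightarrow> ('a set \<Rightarrow> real) \<Rightarrow> real \<Rightarrow> 'a list \<Rightarrow> 'a set \<Rightarrow> 'a set" where
  "rpg_run E f \<beta> vs V' = preemptive_greedy E f \<beta> (filter (\<lambda>v. v \<in> V') vs)"

text \<open>Expected value of f(S_out): V' contains each vertex independently with
  probability 1/2, i.e. V' is uniform over all subsets of V.\<close>
definition rpg_expected_value ::
  "('a \<Rightarrow> 'a \<Rightarrow> bool) \<Rightarrow> ('a set \<Rightarrow> real) \<Rightarrow> real \<Rightarrow> 'a list \<Rightarrow> real" where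
  "rpg_expected_value E f \<beta> vs =
     (\<Sum>V'\<in>Pow (set vs). f (rpg_run E f \<beta> vs V')) / 2 ^ length vs"

end

theory Submission
  imports Defs
begin

lemma before_Nil[simp]: "\<not> before [] a b"
  by (simp add: before_def)

lemma before_Cons: "before (x#xs) a b \<longleftrightarrow> (a = x \<and> b \<in> set xs) \<or> before xs a b"
proof
  assume "before (x#xs) a b"
  then obtain i j where ij: "i < j" "j < Suc (length xs)" "(x#xs)!i = a" "(x#xs)!j = b"
    by (auto simp: before_def)
  then obtain j' where j': "j = Suc j'" by (cases j) auto
  with ij have b: "b = xs ! j'" "j' < length xs" by auto
  show "(a = x \<and> b \<in> set xs) \<or> before xs a b"
  proof (cases i)
    case 0 then show ?thesis using ij b by auto
  next
    case (Suc i')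
    then have "before xs a b" unfolding before_def using ij b j' by (intro exI[of _ i'] exI[of _ j']) auto
    then show ?thesis by blast
  qed
next
  assume "(a = x \<and> b \<in> set xs) \<or> before xs a b"
  then show "before (x#xs) a b"
  proof
    assume "a = x \<and> b \<in> set xs"
    then obtain j where "j < length xs" "xs ! j = b" "a = x" by (auto simp: in_set_conv_nth)
    then show ?thesis unfolding before_def by (intro exI[of _ 0] exI[of _ "Suc j"]) auto
  next
    assume "before xs a b"
    then obtain i j where "i < j" "j < length xs" "xs!i = a" "xs!j = b" by (auto simp: before_def)
    then show ?thesis unfolding before_def by (intro exI[of _ "Suc i"] exI[of _ "Suc j"]) auto
  qed
qed

lemma before_in: "before xs a b \<Longrightarrow> a \<in> set xs \<and> b \<in> set xs"
  by (induct xs) (auto simp: before_Cons)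

lemma before_filter: "before (filter p xs) a b \<Longrightarrow> before xs a b"
  by (induct xs) (auto simp: before_Cons split: if_splits)

lemma before_append_last: "distinct (ys @ x # zs) \<Longrightarrow> before (ys @ x # zs) s x \<longleftrightarrow> s \<in> set ys"
  by (induct ys) (auto simp: before_Cons dest: before_in)

lemma before_irrefl: "distinct xs \<Longrightarrow> \<not> before xs a a"
  by (induct xs) (auto simp: before_Cons)

lemma before_asym: "distinct xs \<Longrightarrow> before xs a b \<Longrightarrow> \<not> before xs b a"
  by (induct xs) (auto simp: before_Cons dest: before_in)

lemma before_drop: "distinct vs \<Longrightarrow> before vs u t \<Longrightarrow>
   \<exists>i<length vs. vs!i = u \<and> t \<in> set (drop i vs) \<and> t \<noteq> u"
proof (induct vs)
  case Nil then show ?case by simp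
next
  case (Cons x xs)
  show ?case
  proof (cases "u = x \<and> t \<in> set xs")
    case True then show ?thesis using Cons.prems by (intro exI[of _ 0]) auto
  next
    case False
    then have "before xs u t" using Cons.prems by (auto simp: before_Cons)
    with Cons obtain i where "i<length xs" "xs!i = u" "t \<in> set (drop i xs)" "t \<noteq> u" by auto
    then show ?thesis by (intro exI[of _ "Suc i"]) auto
  qed
qed

lemma marg_mono:
  assumes sub: "submodular_on V f" and "X \<subseteq> Y" "Y \<subseteq> V" "u \<in> V" "u \<notin> Y"
  shows "marg f Y u \<le> marg f X u"
proof -
  have "f ((X \<union> {u}) \<union> Y) + f ((X \<union> {u}) \<inter> Y) \<le> f (X \<union> {u}) + f Y"
    using sub assms unfolding submodular_on_def by (meson Un_least insert_subset order_trans sup.bounded_iff empty_subsetI insert_subsetI)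
  moreover have "(X \<union> {u}) \<union> Y = Y \<union> {u}" "(X \<union> {u}) \<inter> Y = X" using assms by auto
  ultimately show ?thesis unfolding marg_def by simp
qed

lemma telescope:
  assumes sub: "submodular_on V f" and f0: "f {} = 0" and d: "distinct xs" and S: "S \<subseteq> set xs"
  shows "f S = (\<Sum>u\<in>S. nu xs f S u)"
proof -
  have "\<And>zs. xs = ys @ zs \<Longrightarrow> f (S \<inter> set ys) = (\<Sum>u\<in>S \<inter> set ys. nu xs f S u)" for ys
  proof (induct ys rule: rev_induct)
    case Nil then show ?case using f0 by simp
  next
    case (snoc x ys)
    then have xs: "xs = ys @ x # zs" by simp
    have IH: "f (S \<inter> set ys) = (\<Sum>u\<in>S \<inter> set ys. nu xs f S u)" using snoc.hyps[of "x # zs"] xs by simp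
    show ?case
    proof (cases "x \<in> S")
      case True
      have xn: "x \<notin> S \<inter> set ys" using d xs by auto
      have e: "S \<inter> set (ys @ [x]) = insert x (S \<inter> set ys)" using True by auto
      have e2: "{s \<in> S. before xs s x} = S \<inter> set ys" using before_append_last[of ys x zs] d xs by auto
      have "f (insert x (S \<inter> set ys)) = f (S \<inter> set ys) + nu xs f S x"
        unfolding nu_def e2 marg_def by simp
      then show ?thesis unfolding e using IH xn by simp
    next
      case False
      then have "S \<inter> set (ys @ [x]) = S \<inter> set ys" by auto
      then show ?thesis using IH by simp
    qed
  qed
  from this[of xs "[]"] S show ?thesis by (simp add: Int_absorb2)
qed


context
  fixes E :: "'a \<Rightarrow> 'a \<Rightarrow> bool" and vs :: "'a list" and f :: "'a set \<Rightarrow> real"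
    and k :: nat and \<beta> :: real and V' T :: "'a set"
  assumes sym: "\<And>u v. E u v \<Longrightarrow> E v u"
    and irr: "\<And>v. \<not> E v v"
    and dist: "distinct vs"
    and kind: "inductively_k_independent k E vs"
    and sub: "submodular_on (set vs) f"
    and f0: "f {} = 0"
    and bpos: "\<beta> > 0"
    and Tsub: "T \<subseteq> set vs"
    and Tind: "indep_set E T"
begin

abbreviation "xs \<equiv> filter (\<lambda>v. v \<in> V') vs"

lemma dxs: "distinct xs" using dist by simp
lemma sxs: "set xs \<subseteq> set vs" by auto

lemma card_K: "u \<in> set vs \<Longrightarrow> card {t \<in> T \<inter> P. E u t \<and> before xs u t} \<le> k"
proof -
  assume u: "u \<in> set vs"
  let ?K = "{t \<in> T \<inter> P. E u t \<and> before xs u t}"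
  show ?thesis
  proof (cases "?K = {}")
    case True then show ?thesis by (metis card.empty le0)
  next
    case False
    then obtain t0 where "t0 \<in> ?K" by blast
    then have "before vs u t0" using before_filter[of "\<lambda>v. v \<in> V'" vs] by blast
    then obtain i where i: "i < length vs" "vs!i = u" using before_drop[OF dist] by blast
    have "?K \<subseteq> nbhd (set vs) E (vs ! i) \<inter> set (drop i vs)"
    proof
      fix t assume t: "t \<in> ?K"
      then have "before vs u t" using before_filter[of "\<lambda>v. v \<in> V'" vs] by blast
      then obtain i' where i': "i' < length vs" "vs!i' = u" "t \<in> set (drop i' vs)" "t \<noteq> u"
        using before_drop[OF dist] by blast
      have "i' = i" using i i' dist nth_eq_iff_index_eq by blast
      then show "t \<in> nbhd (set vs) E (vs ! i) \<inter> set (drop i vs)"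
        using t i i' Tsub unfolding nbhd_def by auto
    qed
    moreover have "indep_set E ?K" using Tind unfolding indep_set_def by blast
    ultimately show ?thesis using kind i unfolding inductively_k_independent_def by blast
  qed
qed

definition inv :: "'a set \<Rightarrow> 'a set \<Rightarrow> 'a set \<Rightarrow> real \<Rightarrow> real \<Rightarrow> real \<Rightarrow> ('a \<Rightarrow> nat) \<Rightarrow> bool" where
 "inv P S A G Ch R c \<longleftrightarrow>
   S \<subseteq> A \<and> A \<subseteq> P \<and> indep_set E S \<and>
   (\<forall>u\<in>S. nu xs f S u \<ge> 0) \<and>
   f (A \<union> (T \<inter> P)) \<le> G + (1+\<beta>)*Ch \<and>
   G \<le> (1+1/\<beta>) * f S \<and>
   R \<le> real k * f S / \<beta> \<and>
   Ch \<le> R + (\<Sum>u\<in>S. real (c u) * nu xs f S u) \<and>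
   (\<forall>u\<in>S. c u \<le> card {t \<in> T \<inter> P. E u t \<and> before xs u t})"

lemma step:
  assumes xsd: "xs = ys @ v # zs" and I: "inv (set ys) S A G Ch R c"
  shows "\<exists>A' G' Ch' R' c'. inv (set (ys @ [v])) (pg_step E f \<beta> xs S v) A' G' Ch' R' c'"
proof -
  from I have SA: "S \<subseteq> A" and AP: "A \<subseteq> set ys" and Sind: "indep_set E S"
    and nn: "\<forall>u\<in>S. nu xs f S u \<ge> 0"
    and Ia: "f (A \<union> (T \<inter> set ys)) \<le> G + (1+\<beta>)*Ch"
    and Ib: "G \<le> (1+1/\<beta>) * f S"
    and Ic: "R \<le> real k * f S / \<beta>"
    and Id: "Ch \<le> R + (\<Sum>u\<in>S. real (c u) * nu xs f S u)"
    and Ie: "\<forall>u\<in>S. c u \<le> card {t \<in> T \<inter> set ys. E u t \<and> before xs u t}"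
    unfolding inv_def by blast+
  have d: "distinct (ys @ v # zs)" using dxs xsd by simp
  have vys: "v \<notin> set ys" using d by simp
  have ysV: "set ys \<subseteq> set vs" using xsd sxs by auto
  have vV: "v \<in> set vs" using xsd sxs by auto
  have SV: "S \<subseteq> set vs" using SA AP ysV by auto
  have finS: "finite S" using SV finite_subset by blast
  have vS: "v \<notin> S" using SA AP vys by auto
  define C where "C = nbhd (set xs) E v \<inter> S"
  define \<sigma> where "\<sigma> = (\<Sum>u\<in>C. nu xs f S u)"
  define gain where "gain = marg f S v"
  have CS: "C \<subseteq> S" unfolding C_def by auto
  have finC: "finite C" using finS CS finite_subset by blast
  have \<sigma>0: "\<sigma> \<ge> 0" unfolding \<sigma>_def using nn CS by (intro sum_nonneg) auto
  have ck: "\<forall>u\<in>S. c u \<le> k" using Ie card_K SV by (meson order_trans subsetD)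
  have befv: "\<And>s. s \<in> set ys \<Longrightarrow> before xs s v" using before_append_last[OF d] xsd by simp
  have telS: "f S = (\<Sum>u\<in>S. nu xs f S u)"
    using telescope[OF sub f0 dxs] SA AP xsd by auto
  have sumsplit: "(\<Sum>u\<in>S. g u) = (\<Sum>u\<in>C. g u) + (\<Sum>u\<in>S - C. g u)" for g :: "'a \<Rightarrow> real"
    using sum.subset_diff[OF CS finS, of g] by simp
  have Pv: "set (ys @ [v]) = insert v (set ys)" by simp
  have mono_card: "card {t \<in> T \<inter> set ys. E u t \<and> before xs u t} \<le> card {t \<in> T \<inter> set (ys @ [v]). E u t \<and> before xs u t}" for u
    by (rule card_mono) (use Tsub finite_subset in auto)
  have keyA: "f (A \<union> (T \<inter> set ys) \<union> {v}) \<le> f (A \<union> (T \<inter> set ys)) + gain"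
  proof -
    have "marg f (A \<union> (T \<inter> set ys)) v \<le> marg f S v"
      by (rule marg_mono[OF sub]) (use SA AP ysV Tsub vV vys in auto)
    then show ?thesis unfolding gain_def marg_def by simp
  qed
  show ?thesis
  proof (cases "gain \<ge> (1 + \<beta>) * \<sigma>")
    case True
    define S' where "S' = (S - C) \<union> {v}"
    have step_eq: "pg_step E f \<beta> xs S v = S'"
      unfolding pg_step_def S'_def Let_def C_def[symmetric] \<sigma>_def[symmetric] gain_def[symmetric] using True by simp
    have F1: "nu xs f S u \<le> nu xs f S' u" if u: "u \<in> S - C" for u
    proof -
      have uys: "u \<in> set ys" using u SA AP by auto
      have "\<not> before xs v u" using before_asym[OF dxs] befv[OF uys] by blast
      then have e: "{s \<in> S'. before xs s u} = {s \<in> S - C. before xs s u}" unfolding S'_def by auto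
      show ?thesis unfolding nu_def e
        by (rule marg_mono[OF sub]) (use SV u before_irrefl[OF dxs] in auto)
    qed
    have F2: "gain \<le> nu xs f S' v"
    proof -
      have e: "{s \<in> S'. before xs s v} = S - C" unfolding S'_def
        using befv SA AP before_irrefl[OF dxs] by auto
      show ?thesis unfolding nu_def e gain_def
        by (rule marg_mono[OF sub]) (use SV vV vS in auto)
    qed
    have S'sub: "S' \<subseteq> set xs" unfolding S'_def using SA AP xsd by auto
    have telS': "f S' = (\<Sum>u\<in>S'. nu xs f S' u)" using telescope[OF sub f0 dxs S'sub] .
    have sumS': "(\<Sum>u\<in>S'. g u) = g v + (\<Sum>u\<in>S - C. g u)" for g :: "'a \<Rightarrow> real"
      unfolding S'_def using finS vS by (subst Un_commute) (simp add: sum.insert)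
    have F3: "f S' \<ge> f S + gain - \<sigma>"
    proof -
      have "(\<Sum>u\<in>S - C. nu xs f S u) \<le> (\<Sum>u\<in>S - C. nu xs f S' u)"
        by (rule sum_mono) (rule F1)
      then show ?thesis using telS telS' sumS'[of "nu xs f S'"] sumsplit[of "nu xs f S"] F2
        unfolding \<sigma>_def by linarith
    qed
    have delta1: "\<beta> * \<sigma> \<le> f S' - f S" using F3 True by (simp add: algebra_simps)
    have gain0: "gain \<ge> 0" using True \<sigma>0 bpos by (smt (verit) mult_nonneg_nonneg)
    have delta2: "gain \<le> (1 + 1/\<beta>) * (f S' - f S)"
    proof -
      have "gain \<le> (1 + 1/\<beta>) * (gain - \<sigma>)"
      proof -
        have "\<beta> * gain \<le> (\<beta> + 1) * (gain - \<sigma>)" using True by (simp add: algebra_simps)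
        then show ?thesis using bpos by (simp add: field_simps)
      qed
      also have "\<dots> \<le> (1 + 1/\<beta>) * (f S' - f S)" using F3 bpos
        by (intro mult_left_mono) (auto simp: field_simps)
      finally show ?thesis .
    qed
    define R' where "R' = R + (\<Sum>u\<in>C. real (c u) * nu xs f S u)"
    define c' where "c' = c(v := 0)"
    have "inv (set (ys @ [v])) S' (A \<union> {v}) (G + gain) Ch R' c'"
      unfolding inv_def
    proof (intro conjI)
      show "S' \<subseteq> A \<union> {v}" unfolding S'_def using SA by auto
      show "A \<union> {v} \<subseteq> set (ys @ [v])" using AP by auto
      show "indep_set E S'" unfolding indep_set_def S'_def
      proof (intro ballI)
        fix a b assume a: "a \<in> S - C \<union> {v}" and b: "b \<in> S - C \<union> {v}"
        have nE: "\<not> E v w" if w: "w \<in> S - C" for w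
        proof
          assume "E v w"
          moreover have "w \<in> set xs" using w SA AP xsd by auto
          moreover have "w \<noteq> v" using w vS by auto
          ultimately have "w \<in> C" using w unfolding C_def nbhd_def by auto
          then show False using w by auto
        qed
        show "\<not> E a b" using a b nE sym irr Sind unfolding indep_set_def by blast
      qed
      show "\<forall>u\<in>S'. 0 \<le> nu xs f S' u"
        using F1 F2 nn gain0 unfolding S'_def by fastforce
      show "f ((A \<union> {v}) \<union> (T \<inter> set (ys @ [v]))) \<le> G + gain + (1 + \<beta>) * Ch"
      proof -
        have "(A \<union> {v}) \<union> (T \<inter> set (ys @ [v])) = A \<union> (T \<inter> set ys) \<union> {v}" by auto
        then show ?thesis using keyA Ia by simp
      qed
      show "G + gain \<le> (1 + 1 / \<beta>) * f S'" using Ib delta2 by (simp add: algebra_simps)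
      show "R' \<le> real k * f S' / \<beta>"
      proof -
        have "(\<Sum>u\<in>C. real (c u) * nu xs f S u) \<le> (\<Sum>u\<in>C. real k * nu xs f S u)"
          using ck nn CS by (intro sum_mono mult_right_mono) auto
        also have "\<dots> = real k * \<sigma>" unfolding \<sigma>_def by (simp add: sum_distrib_left)
        also have "\<dots> \<le> real k * ((f S' - f S) / \<beta>)"
          using delta1 bpos by (intro mult_left_mono) (auto simp: field_simps)
        finally have "R' \<le> real k * f S / \<beta> + real k * ((f S' - f S) / \<beta>)" unfolding R'_def using Ic by linarith
        also have "\<dots> = real k * f S' / \<beta>" using bpos by (simp add: field_simps)
        finally show ?thesis .
      qed
      show "Ch \<le> R' + (\<Sum>u\<in>S'. real (c' u) * nu xs f S' u)"
      proof -
        have "(\<Sum>u\<in>S - C. real (c u) * nu xs f S u) \<le> (\<Sum>u\<in>S - C. real (c u) * nu xs f S' u)"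
          using F1 by (intro sum_mono mult_left_mono) auto
        also have "\<dots> = (\<Sum>u\<in>S - C. real (c' u) * nu xs f S' u)"
          unfolding c'_def using vS by (intro sum.cong) auto
        finally have "(\<Sum>u\<in>S - C. real (c u) * nu xs f S u) \<le> (\<Sum>u\<in>S'. real (c' u) * nu xs f S' u)"
          using sumS'[of "\<lambda>u. real (c' u) * nu xs f S' u"] unfolding c'_def by simp
        then show ?thesis using Id sumsplit[of "\<lambda>u. real (c u) * nu xs f S u"] unfolding R'_def by linarith
      qed
      show "\<forall>u\<in>S'. c' u \<le> card {t \<in> T \<inter> set (ys @ [v]). E u t \<and> before xs u t}"
        using Ie mono_card unfolding S'_def c'_def by (auto intro: order_trans)
    qed
    then show ?thesis unfolding step_eq by blast
  next
    case False
    have step_eq: "pg_step E f \<beta> xs S v = S"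
      unfolding pg_step_def Let_def C_def[symmetric] \<sigma>_def[symmetric] gain_def[symmetric] using False by simp
    show ?thesis
    proof (cases "v \<in> T")
      case vT: True
      define c' where "c' = (\<lambda>u. if u \<in> C then Suc (c u) else c u)"
      have "inv (set (ys @ [v])) S A G (Ch + \<sigma>) R c'"
        unfolding inv_def
      proof (intro conjI)
        show "S \<subseteq> A" "indep_set E S" "\<forall>u\<in>S. 0 \<le> nu xs f S u" "G \<le> (1 + 1 / \<beta>) * f S"
          "R \<le> real k * f S / \<beta>" using SA Sind nn Ib Ic by auto
        show "A \<subseteq> set (ys @ [v])" using AP by auto
        show "f (A \<union> (T \<inter> set (ys @ [v]))) \<le> G + (1 + \<beta>) * (Ch + \<sigma>)"
        proof -
          have "A \<union> (T \<inter> set (ys @ [v])) = A \<union> (T \<inter> set ys) \<union> {v}" using vT by auto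
          then show ?thesis using keyA Ia False by (simp add: algebra_simps)
        qed
        show "Ch + \<sigma> \<le> R + (\<Sum>u\<in>S. real (c' u) * nu xs f S u)"
        proof -
          have "(\<Sum>u\<in>S. real (c' u) * nu xs f S u) = (\<Sum>u\<in>S. real (c u) * nu xs f S u + (if u \<in> C then nu xs f S u else 0))"
            unfolding c'_def by (intro sum.cong) (auto simp: algebra_simps)
          also have "\<dots> = (\<Sum>u\<in>S. real (c u) * nu xs f S u) + \<sigma>"
            unfolding \<sigma>_def sum.distrib using sum.inter_restrict[OF finS, of "nu xs f S" C, symmetric] CS
            by (simp add: Int_absorb1 inf.absorb2)
          finally show ?thesis using Id by linarith
        qed
        show "\<forall>u\<in>S. c' u \<le> card {t \<in> T \<inter> set (ys @ [v]). E u t \<and> before xs u t}"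
        proof
          fix u assume uS: "u \<in> S"
          show "c' u \<le> card {t \<in> T \<inter> set (ys @ [v]). E u t \<and> before xs u t}"
          proof (cases "u \<in> C")
            case True
            have "E u v" using True sym unfolding C_def nbhd_def by auto
            moreover have "before xs u v" using befv uS SA AP by auto
            ultimately have "insert v {t \<in> T \<inter> set ys. E u t \<and> before xs u t} \<subseteq> {t \<in> T \<inter> set (ys @ [v]). E u t \<and> before xs u t}"
              using vT by auto
            then have "card (insert v {t \<in> T \<inter> set ys. E u t \<and> before xs u t}) \<le> card {t \<in> T \<inter> set (ys @ [v]). E u t \<and> before xs u t}"
              by (intro card_mono) (use Tsub finite_subset in auto)
            moreover have "card (insert v {t \<in> T \<inter> set ys. E u t \<and> before xs u t}) = Suc (card {t \<in> T \<inter> set ys. E u t \<and> before xs u t})"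
              using vys by (intro card_insert_disjoint) (use Tsub finite_subset in auto)
            ultimately show ?thesis using Ie uS True unfolding c'_def by auto
          next
            case False
            then show ?thesis using Ie uS mono_card[of u] unfolding c'_def by auto
          qed
        qed
      qed
      then show ?thesis unfolding step_eq by blast
    next
      case vT: False
      have "inv (set (ys @ [v])) S A G Ch R c"
        unfolding inv_def
      proof (intro conjI)
        show "S \<subseteq> A" "indep_set E S" "\<forall>u\<in>S. 0 \<le> nu xs f S u" "G \<le> (1 + 1 / \<beta>) * f S"
          "R \<le> real k * f S / \<beta>" "Ch \<le> R + (\<Sum>u\<in>S. real (c u) * nu xs f S u)" using SA Sind nn Ib Ic Id by auto
        show "A \<subseteq> set (ys @ [v])" using AP by auto
        have "T \<inter> set (ys @ [v]) = T \<inter> set ys" using vT by auto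
        then show "f (A \<union> (T \<inter> set (ys @ [v]))) \<le> G + (1 + \<beta>) * Ch" using Ia by simp
        show "\<forall>u\<in>S. c u \<le> card {t \<in> T \<inter> set (ys @ [v]). E u t \<and> before xs u t}"
          using Ie mono_card by (auto intro: order_trans)
      qed
      then show ?thesis unfolding step_eq by blast
    qed
  qed
qed

lemma run_inv: "xs = ys @ zs \<Longrightarrow> \<exists>A G Ch R c. inv (set ys) (fold (\<lambda>v S. pg_step E f \<beta> xs S v) ys {}) A G Ch R c"
proof (induct ys arbitrary: zs rule: rev_induct)
  case Nil
  have "inv {} {} {} 0 0 0 (\<lambda>_. 0)" unfolding inv_def indep_set_def using f0 by simp
  then show ?case by (simp only: fold_Nil set_simps id_apply) blast
next
  case (snoc v ys)
  then obtain A G Ch R c where "inv (set ys) (fold (\<lambda>v S. pg_step E f \<beta> xs S v) ys {}) A G Ch R c"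
    by fastforce
  from step[where zs=zs, OF _ this] snoc.prems show ?case by simp
qed

lemma det:
  assumes V'V: "V' \<subseteq> set vs"
  shows "rpg_run E f \<beta> vs V' \<subseteq> set vs \<and> indep_set E (rpg_run E f \<beta> vs V') \<and>
    (\<exists>A \<subseteq> V'. f (A \<union> (T \<inter> V')) \<le> (real k * (1 + \<beta>) + 1) * (1 + 1 / \<beta>) * f (rpg_run E f \<beta> vs V'))"
proof -
  define S where "S = rpg_run E f \<beta> vs V'"
  have S: "S = fold (\<lambda>v S. pg_step E f \<beta> xs S v) xs {}"
    unfolding S_def rpg_run_def preemptive_greedy_def by simp
  obtain A G Ch R c where I: "inv (set xs) S A G Ch R c" using run_inv[of xs "[]"] S by auto
  have sx: "set xs = V'" using V'V by auto
  from I have SA: "S \<subseteq> A" and AP: "A \<subseteq> set xs" and Sind: "indep_set E S"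
    and nn: "\<forall>u\<in>S. nu xs f S u \<ge> 0"
    and Ia: "f (A \<union> (T \<inter> set xs)) \<le> G + (1+\<beta>)*Ch"
    and Ib: "G \<le> (1+1/\<beta>) * f S"
    and Ic: "R \<le> real k * f S / \<beta>"
    and Id: "Ch \<le> R + (\<Sum>u\<in>S. real (c u) * nu xs f S u)"
    and Ie: "\<forall>u\<in>S. c u \<le> card {t \<in> T \<inter> set xs. E u t \<and> before xs u t}"
    unfolding inv_def by blast+
  have SV: "S \<subseteq> set vs" using SA AP sxs by auto
  have ck: "\<forall>u\<in>S. c u \<le> k" using Ie card_K SV by (meson order_trans subsetD)
  have tel: "f S = (\<Sum>u\<in>S. nu xs f S u)" using telescope[OF sub f0 dxs] SA AP by auto
  have "(\<Sum>u\<in>S. real (c u) * nu xs f S u) \<le> (\<Sum>u\<in>S. real k * nu xs f S u)"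
    using ck nn by (intro sum_mono mult_right_mono) auto
  also have "\<dots> = real k * f S" using tel by (simp add: sum_distrib_left)
  finally have Ch: "Ch \<le> real k * f S / \<beta> + real k * f S" using Id Ic by linarith
  have "f (A \<union> (T \<inter> V')) \<le> (1+1/\<beta>) * f S + (1+\<beta>) * (real k * f S / \<beta> + real k * f S)"
    using Ia Ib Ch bpos sx by (smt (verit) mult_left_mono)
  also have "\<dots> = (real k * (1 + \<beta>) + 1) * (1 + 1 / \<beta>) * f S" using bpos by (simp add: field_simps)
  finally have "f (A \<union> (T \<inter> V')) \<le> (real k * (1 + \<beta>) + 1) * (1 + 1 / \<beta>) * f S" .
  then show ?thesis using SV Sind AP sx unfolding S_def by blast
qed

end

lemma pair_bound:
  fixes g h :: "'a set \<Rightarrow> real"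
  assumes fin: "finite V" and D: "D \<subseteq> V"
    and gh: "\<And>X. X \<subseteq> V \<Longrightarrow> h X \<le> g X + g ((X - D) \<union> (D - X))"
  shows "(\<Sum>X\<in>Pow V. h X) \<le> 2 * (\<Sum>X\<in>Pow V. g X)"
proof -
  let ?p = "\<lambda>X. (X - D) \<union> (D - X)"
  have re: "(\<Sum>X\<in>Pow V. g (?p X)) = (\<Sum>X\<in>Pow V. g X)"
    by (rule sum.reindex_bij_witness[where i = ?p and j = ?p]) (use D in auto)
  have "(\<Sum>X\<in>Pow V. h X) \<le> (\<Sum>X\<in>Pow V. g X + g (?p X))"
    using gh by (intro sum_mono) auto
  also have "\<dots> = 2 * (\<Sum>X\<in>Pow V. g X)" unfolding sum.distrib re by simp
  finally show ?thesis .
qed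

theorem theorem7:
  fixes E :: "'a \<Rightarrow> 'a \<Rightarrow> bool" and vs :: "'a list" and f :: "'a set \<Rightarrow> real"
    and k :: nat and \<beta> :: real
  assumes "k \<ge> 1"
    and "distinct vs"
    and "\<And>u v. E u v \<Longrightarrow> E v u"
    and "\<And>v. \<not> E v v"
    and "inductively_k_independent k E vs"
    and "submodular_on (set vs) f"
    and "\<And>A. A \<subseteq> set vs \<Longrightarrow> f A \<ge> 0"
    and "f {} = 0"
    and "\<beta> > 0"
  shows "(\<forall>V' \<subseteq> set vs. rpg_run E f \<beta> vs V' \<subseteq> set vs
             \<and> indep_set E (rpg_run E f \<beta> vs V'))
     \<and> (\<forall>T. T \<subseteq> set vs \<and> indep_set E T \<longrightarrow>
          f T \<le> 4 * (real k * (1 + \<beta>) + 1) * (1 + 1 / \<beta>) * rpg_expected_value E f \<beta> vs)"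
proof -
  note base = assms(3,4,2,5,6,8,9)
  have e0: "{} \<subseteq> set vs" "indep_set E {}" by (auto simp: indep_set_def)
  have P1: "\<forall>V' \<subseteq> set vs. rpg_run E f \<beta> vs V' \<subseteq> set vs \<and> indep_set E (rpg_run E f \<beta> vs V')"
    using det[OF base e0] by blast
  have P2: "f T \<le> 4 * (real k * (1 + \<beta>) + 1) * (1 + 1 / \<beta>) * rpg_expected_value E f \<beta> vs"
    if T: "T \<subseteq> set vs" "indep_set E T" for T
  proof -
    let ?V = "set vs"
    let ?c = "(real k * (1 + \<beta>) + 1) * (1 + 1 / \<beta>)"
    let ?S = "\<lambda>X. rpg_run E f \<beta> vs X"
    have cpos: "?c > 0" using assms(9) by (intro mult_pos_pos add_nonneg_pos add_pos_pos) auto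
    define Af where "Af X = (SOME A. A \<subseteq> X \<and> f (A \<union> (T \<inter> X)) \<le> ?c * f (?S X))" for X
    have Af: "Af X \<subseteq> X \<and> f (Af X \<union> (T \<inter> X)) \<le> ?c * f (?S X)" if "X \<subseteq> ?V" for X
      unfolding Af_def by (rule someI_ex) (use det[OF base T that] in blast)
    define B where "B X = Af X - T" for X
    have BX: "B X \<union> (T \<inter> X) = Af X \<union> (T \<inter> X)" if "X \<subseteq> ?V" for X
      using Af[OF that] unfolding B_def by auto
    have fin: "finite ?V" by simp
    have sub: "submodular_on ?V f" and nn: "\<And>A. A \<subseteq> ?V \<Longrightarrow> f A \<ge> 0" using assms by auto
    have stepa: "(\<Sum>X\<in>Pow ?V. f (T \<inter> X)) \<le> 2 * (\<Sum>X\<in>Pow ?V. f (B X \<union> (T \<inter> X)))"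
    proof (rule pair_bound[OF fin, of "?V - T"])
      fix X assume X: "X \<subseteq> ?V"
      let ?Y = "(X - (?V - T)) \<union> ((?V - T) - X)"
      have Y: "?Y \<subseteq> ?V" using X by auto
      have TY: "T \<inter> ?Y = T \<inter> X" using X by auto
      have B1: "B X \<subseteq> X - T" using Af[OF X] unfolding B_def by auto
      have AY: "Af ?Y \<subseteq> ?Y" using Af[OF Y] by blast
      have YT: "?Y - T = (?V - T) - X" using X by blast
      have B2: "B ?Y \<subseteq> (?V - T) - X" using AY YT unfolding B_def by blast
      have s1: "B X \<union> (T \<inter> X) \<subseteq> ?V" "B ?Y \<union> (T \<inter> X) \<subseteq> ?V" using B1 B2 X by auto
      have h1: "f ((B X \<union> (T \<inter> X)) \<union> (B ?Y \<union> (T \<inter> X))) + f ((B X \<union> (T \<inter> X)) \<inter> (B ?Y \<union> (T \<inter> X)))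
           \<le> f (B X \<union> (T \<inter> X)) + f (B ?Y \<union> (T \<inter> X))"
        using sub s1 unfolding submodular_on_def by blast
      have h2: "(B X \<union> (T \<inter> X)) \<inter> (B ?Y \<union> (T \<inter> X)) = T \<inter> X" using B1 B2 by auto
      have h3: "f ((B X \<union> (T \<inter> X)) \<union> (B ?Y \<union> (T \<inter> X))) \<ge> 0" using nn s1 by auto
      show "f (T \<inter> X) \<le> f (B X \<union> (T \<inter> X)) + f (B ?Y \<union> (T \<inter> ?Y))"
        unfolding TY using h1[unfolded h2] h3 by linarith
    qed auto
    have stepb: "(\<Sum>X\<in>Pow ?V. f T) \<le> 2 * (\<Sum>X\<in>Pow ?V. f (T \<inter> X))"
    proof (rule pair_bound[OF fin, of T])
      show "T \<subseteq> ?V" using T by simp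
      fix X assume X: "X \<subseteq> ?V"
      have e1: "T \<inter> ((X - T) \<union> (T - X)) = T - X" by auto
      have sTX: "T \<inter> X \<subseteq> ?V" "T - X \<subseteq> ?V" using T by auto
      have h: "f ((T \<inter> X) \<union> (T - X)) + f ((T \<inter> X) \<inter> (T - X)) \<le> f (T \<inter> X) + f (T - X)"
        using sub sTX unfolding submodular_on_def by blast
      have e2: "(T \<inter> X) \<union> (T - X) = T" "(T \<inter> X) \<inter> (T - X) = {}" by auto
      show "f T \<le> f (T \<inter> X) + f (T \<inter> ((X - T) \<union> (T - X)))"
        unfolding e1 using h[unfolded e2] assms(8) by linarith
    qed
    have stepc: "(\<Sum>X\<in>Pow ?V. f (B X \<union> (T \<inter> X))) \<le> ?c * (\<Sum>X\<in>Pow ?V. f (?S X))"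
      unfolding sum_distrib_left using Af BX by (intro sum_mono) auto
    have cardV: "card (Pow ?V) = 2 ^ length vs" using assms(2) by (simp add: card_Pow distinct_card)
    have "2 ^ length vs * f T \<le> 4 * (?c * (\<Sum>X\<in>Pow ?V. f (?S X)))"
      using stepa stepb stepc cardV by simp
    then have "f T \<le> 4 * (?c * (\<Sum>X\<in>Pow ?V. f (?S X))) / 2 ^ length vs"
      by (simp add: pos_le_divide_eq mult.commute)
    then show ?thesis unfolding rpg_expected_value_def by (simp only: times_divide_eq_right mult.assoc)
  qed
  show ?thesis using P1 P2 by blast
qed

end
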